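(* Let $G$ be a group acting without inversions on a tree $T$ and let $H$ be a subgroup of $G$ acting freely on the edges of $T$. If $K_{T}(H)<\infty$, then $H$ is tame.
   Context: An element is hyperbolic if it fixes no vertex of $T$. If $H$ contains a hyperbolic element, $T_H$ is the unique minimal $H$-invariant subtree of $T$. $H$ is tame if either $H$ fixes a vertex of $T$, or $H$ contains a hyperbolic element and $T_H/H$ is finite. A vertex $v$ of $T$ is $H$-degenerate if $H_v=H_e$ for some edge $e$ with initial vertex $v$; the vertex $[v]_H$ of $T/H$ is then degenerate. For $H$ acting freely on edges, the Kurosh rank is $K_T(H)=r(T/H)+|V_{ndeg}(T/H)|$ if $H$ contains a hyperbolic element, where $r(T/H)$ is the rank of the fundamental group of $T/H$ and $V_{ndeg}(T/H)$ the set of non-degenerate vertices of $T/H$, and $K_T(H)=1$ otherwise. *)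

theory Defs
  imports "HOL-Algebra.Group_Action" "HOL-Library.Extended_Nat"
begin

section \<open>Graphs in the sense of Serre\<close>

record ('v, 'e) sgraph =
  verts :: "'v set"
  arcs  :: "'e set"
  src   :: "'e \<Rightarrow> 'v"
  rev   :: "'e \<Rightarrow> 'e"

definition tgt :: "('v, 'e) sgraph \<Rightarrow> 'e \<Rightarrow> 'v" where
  "tgt g e = src g (rev g e)"

definition is_sgraph :: "('v, 'e) sgraph \<Rightarrow> bool" where
  "is_sgraph g \<longleftrightarrow> (\<forall>e \<in> arcs g. src g e \<in> verts g \<and> rev g e \<in> arcs g
      \<and> rev g (rev g e) = e \<and> rev g e \<noteq> e)"

definition is_path :: "('v, 'e) sgraph \<Rightarrow> 'v \<Rightarrow> 'e list \<Rightarrow> 'v \<Rightarrow> bool" where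
  "is_path g u es v \<longleftrightarrow> u \<in> verts g \<and> v \<in> verts g \<and> set es \<subseteq> arcs g \<and>
     (if es = [] then u = v
      else src g (hd es) = u \<and> tgt g (last es) = v \<and>
           (\<forall>i. Suc i < length es \<longrightarrow> tgt g (es ! i) = src g (es ! Suc i)))"

definition reduced :: "('v, 'e) sgraph \<Rightarrow> 'e list \<Rightarrow> bool" where
  "reduced g es \<longleftrightarrow> (\<forall>i. Suc i < length es \<longrightarrow> es ! Suc i \<noteq> rev g (es ! i))"

definition connected_sg :: "('v, 'e) sgraph \<Rightarrow> bool" where
  "connected_sg g \<longleftrightarrow> (\<forall>u \<in> verts g. \<forall>v \<in> verts g. \<exists>es. is_path g u es v)"

definition is_tree :: "('v, 'e) sgraph \<Rightarrow> bool" where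
  "is_tree g \<longleftrightarrow> is_sgraph g \<and> verts g \<noteq> {} \<and> connected_sg g \<and>
     \<not> (\<exists>v es. es \<noteq> [] \<and> is_path g v es v \<and> reduced g es)"

definition subg :: "('v, 'e) sgraph \<Rightarrow> 'v set \<Rightarrow> 'e set \<Rightarrow> ('v, 'e) sgraph" where
  "subg g V' E' = g\<lparr>verts := V', arcs := E'\<rparr>"

definition ecard :: "'a set \<Rightarrow> enat" where
  "ecard A = (if finite A then enat (card A) else \<infinity>)"

text \<open>Rank of the fundamental group of a connected graph: the number of geometric
  edges (pairs {e, e-bar}) not lying in a maximal (spanning) subtree.
  It is \<infinity> if this complement is infinite.\<close>
definition spanning_tree :: "('v, 'e) sgraph \<Rightarrow> 'e set \<Rightarrow> bool" where
  "spanning_tree g A \<longleftrightarrow> A \<subseteq> arcs g \<and> is_tree (subg g (verts g) A)"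

definition graph_rank :: "('v, 'e) sgraph \<Rightarrow> enat" where
  "graph_rank g = (if \<exists>A. spanning_tree g A \<and> finite (arcs g - A)
      then enat (card (arcs g - (SOME A. spanning_tree g A \<and> finite (arcs g - A))) div 2)
      else \<infinity>)"

definition tree_action :: "('g, 'b) monoid_scheme \<Rightarrow> ('v, 'e) sgraph
    \<Rightarrow> ('g \<Rightarrow> 'v \<Rightarrow> 'v) \<Rightarrow> ('g \<Rightarrow> 'e \<Rightarrow> 'e) \<Rightarrow> bool" where
  "tree_action G T \<phi> \<psi> \<longleftrightarrow> group G \<and> is_tree T \<and>
     group_action G (verts T) \<phi> \<and> group_action G (arcs T) \<psi> \<and>
     (\<forall>g \<in> carrier G. \<forall>e \<in> arcs T.
        src T (\<psi> g e) = \<phi> g (src T e) \<and> \<psi> g (rev T e) = rev T (\<psi> g e))"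

definition without_inversions :: "('g, 'b) monoid_scheme \<Rightarrow> ('v, 'e) sgraph
    \<Rightarrow> ('g \<Rightarrow> 'e \<Rightarrow> 'e) \<Rightarrow> bool" where
  "without_inversions G T \<psi> \<longleftrightarrow> (\<forall>g \<in> carrier G. \<forall>e \<in> arcs T. \<psi> g e \<noteq> rev T e)"

definition acts_freely_on_edges :: "('g, 'b) monoid_scheme \<Rightarrow> 'g set \<Rightarrow> ('v, 'e) sgraph
    \<Rightarrow> ('g \<Rightarrow> 'e \<Rightarrow> 'e) \<Rightarrow> bool" where
  "acts_freely_on_edges G H T \<psi> \<longleftrightarrow> (\<forall>h \<in> H. \<forall>e \<in> arcs T. \<psi> h e = e \<longrightarrow> h = \<one>\<^bsub>G\<^esub>)"

definition horb :: "'g set \<Rightarrow> ('g \<Rightarrow> 'x \<Rightarrow> 'x) \<Rightarrow> 'x \<Rightarrow> 'x set" where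
  "horb H f x = (\<lambda>h. f h x) ` H"

definition hstab :: "'g set \<Rightarrow> ('g \<Rightarrow> 'x \<Rightarrow> 'x) \<Rightarrow> 'x \<Rightarrow> 'g set" where
  "hstab H f x = {h \<in> H. f h x = x}"

definition hyperbolic :: "('v, 'e) sgraph \<Rightarrow> ('g \<Rightarrow> 'v \<Rightarrow> 'v) \<Rightarrow> 'g \<Rightarrow> bool" where
  "hyperbolic T \<phi> g \<longleftrightarrow> (\<forall>v \<in> verts T. \<phi> g v \<noteq> v)"

definition has_hyperbolic :: "'g set \<Rightarrow> ('v, 'e) sgraph \<Rightarrow> ('g \<Rightarrow> 'v \<Rightarrow> 'v) \<Rightarrow> bool" where
  "has_hyperbolic H T \<phi> \<longleftrightarrow> (\<exists>h \<in> H. hyperbolic T \<phi> h)"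

definition quot_graph :: "'g set \<Rightarrow> ('v, 'e) sgraph \<Rightarrow> ('g \<Rightarrow> 'v \<Rightarrow> 'v)
    \<Rightarrow> ('g \<Rightarrow> 'e \<Rightarrow> 'e) \<Rightarrow> ('v set, 'e set) sgraph" where
  "quot_graph H T \<phi> \<psi> =
     \<lparr> verts = horb H \<phi> ` verts T,
       arcs = horb H \<psi> ` arcs T,
       src = (\<lambda>c. horb H \<phi> (src T (SOME e. e \<in> c))),
       rev = (\<lambda>c. horb H \<psi> (rev T (SOME e. e \<in> c))) \<rparr>"

definition H_degenerate :: "'g set \<Rightarrow> ('v, 'e) sgraph \<Rightarrow> ('g \<Rightarrow> 'v \<Rightarrow> 'v)
    \<Rightarrow> ('g \<Rightarrow> 'e \<Rightarrow> 'e) \<Rightarrow> 'v \<Rightarrow> bool" where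
  "H_degenerate H T \<phi> \<psi> v \<longleftrightarrow>
     (\<exists>e \<in> arcs T. src T e = v \<and> hstab H \<phi> v = hstab H \<psi> e)"

definition nondeg_quot_verts :: "'g set \<Rightarrow> ('v, 'e) sgraph \<Rightarrow> ('g \<Rightarrow> 'v \<Rightarrow> 'v)
    \<Rightarrow> ('g \<Rightarrow> 'e \<Rightarrow> 'e) \<Rightarrow> 'v set set" where
  "nondeg_quot_verts H T \<phi> \<psi> =
     {c \<in> horb H \<phi> ` verts T. \<not> (\<exists>v \<in> c. H_degenerate H T \<phi> \<psi> v)}"

definition kurosh_rank :: "'g set \<Rightarrow> ('v, 'e) sgraph \<Rightarrow> ('g \<Rightarrow> 'v \<Rightarrow> 'v)
    \<Rightarrow> ('g \<Rightarrow> 'e \<Rightarrow> 'e) \<Rightarrow> enat" where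
  "kurosh_rank H T \<phi> \<psi> =
     (if has_hyperbolic H T \<phi>
      then graph_rank (quot_graph H T \<phi> \<psi>) + ecard (nondeg_quot_verts H T \<phi> \<psi>)
      else 1)"

definition inv_subtree :: "'g set \<Rightarrow> ('v, 'e) sgraph \<Rightarrow> ('g \<Rightarrow> 'v \<Rightarrow> 'v)
    \<Rightarrow> ('g \<Rightarrow> 'e \<Rightarrow> 'e) \<Rightarrow> 'v set \<Rightarrow> 'e set \<Rightarrow> bool" where
  "inv_subtree H T \<phi> \<psi> V' E' \<longleftrightarrow> V' \<subseteq> verts T \<and> E' \<subseteq> arcs T \<and>
     is_tree (subg T V' E') \<and> (\<forall>h \<in> H. \<phi> h ` V' \<subseteq> V' \<and> \<psi> h ` E' \<subseteq> E')"

definition minimal_inv_subtree :: "'g set \<Rightarrow> ('v, 'e) sgraph \<Rightarrow> ('g \<Rightarrow> 'v \<Rightarrow> 'v)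
    \<Rightarrow> ('g \<Rightarrow> 'e \<Rightarrow> 'e) \<Rightarrow> 'v set \<Rightarrow> 'e set \<Rightarrow> bool" where
  "minimal_inv_subtree H T \<phi> \<psi> V' E' \<longleftrightarrow> inv_subtree H T \<phi> \<psi> V' E' \<and>
     (\<forall>V'' E''. inv_subtree H T \<phi> \<psi> V'' E'' \<and> V'' \<subseteq> V' \<and> E'' \<subseteq> E'
        \<longrightarrow> V'' = V' \<and> E'' = E')"

definition tame :: "'g set \<Rightarrow> ('v, 'e) sgraph \<Rightarrow> ('g \<Rightarrow> 'v \<Rightarrow> 'v)
    \<Rightarrow> ('g \<Rightarrow> 'e \<Rightarrow> 'e) \<Rightarrow> bool" where
  "tame H T \<phi> \<psi> \<longleftrightarrow>
     (\<exists>v \<in> verts T. \<forall>h \<in> H. \<phi> h v = v) \<or>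
     (has_hyperbolic H T \<phi> \<and>
      (\<exists>V' E'. minimal_inv_subtree H T \<phi> \<psi> V' E' \<and>
               finite (horb H \<phi> ` V') \<and> finite (horb H \<psi> ` E')))"

end

theory Submission
  imports Defs
begin


lemma path_Nil[simp]: "is_path g u [] v \<longleftrightarrow> u = v \<and> u \<in> verts g"
  unfolding is_path_def by auto

lemma path_Cons:
  assumes "is_sgraph g"
  shows "is_path g u (e # es) v \<longleftrightarrow> e \<in> arcs g \<and> src g e = u \<and> is_path g (tgt g e) es v"
proof
  assume H: "is_path g u (e # es) v"
  hence e: "e \<in> arcs g" "src g e = u" unfolding is_path_def by auto
  have tv: "tgt g e \<in> verts g" using assms e unfolding is_sgraph_def tgt_def by auto
  show "e \<in> arcs g \<and> src g e = u \<and> is_path g (tgt g e) es v"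
  proof (cases "es = []")
    case True thus ?thesis using H e tv unfolding is_path_def by auto
  next
    case False
    have "\<forall>i. Suc i < length es \<longrightarrow> tgt g (es ! i) = src g (es ! Suc i)"
    proof (intro allI impI)
      fix i assume "Suc i < length es"
      hence "Suc (Suc i) < length (e # es)" by simp
      thus "tgt g (es ! i) = src g (es ! Suc i)" using H unfolding is_path_def
        by (metis list.distinct(1) nth_Cons_Suc)
    qed
    moreover have "tgt g e = src g (hd es)" using H False unfolding is_path_def
      by (metis hd_conv_nth length_greater_0_conv list.distinct(1) length_Cons
          nth_Cons_0 nth_Cons_Suc Suc_less_eq)
    moreover have "tgt g (last es) = v" using H False unfolding is_path_def by auto
    ultimately show ?thesis using H e tv False unfolding is_path_def by auto
  qed
next
  assume H: "e \<in> arcs g \<and> src g e = u \<and> is_path g (tgt g e) es v"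
  have uv: "u \<in> verts g" using H assms unfolding is_sgraph_def by auto
  show "is_path g u (e # es) v"
  proof (cases "es = []")
    case True thus ?thesis using H uv unfolding is_path_def by auto
  next
    case False
    have "\<forall>i. Suc i < length (e#es) \<longrightarrow> tgt g ((e#es) ! i) = src g ((e#es) ! Suc i)"
    proof (intro allI impI)
      fix i assume i: "Suc i < length (e#es)"
      show "tgt g ((e#es) ! i) = src g ((e#es) ! Suc i)"
      proof (cases i)
        case 0 thus ?thesis using H False unfolding is_path_def by (simp add: hd_conv_nth)
      next
        case (Suc j) thus ?thesis using H False i unfolding is_path_def by auto
      qed
    qed
    thus ?thesis using H uv False unfolding is_path_def by auto
  qed
qed

lemma reduced_Nil[simp]: "reduced g []" and reduced_single[simp]: "reduced g [e]"
  unfolding reduced_def by auto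

lemma reduced_Cons2: "reduced g (e # f # es) \<longleftrightarrow> f \<noteq> rev g e \<and> reduced g (f # es)"
proof
  assume H: "reduced g (e # f # es)"
  have "f \<noteq> rev g e" using H unfolding reduced_def by (metis length_Cons nth_Cons_0 nth_Cons_Suc zero_less_Suc Suc_less_eq)
  moreover have "reduced g (f # es)" unfolding reduced_def
  proof (intro allI impI)
    fix i assume "Suc i < length (f # es)"
    hence "Suc (Suc i) < length (e # f # es)" by simp
    thus "(f # es) ! Suc i \<noteq> rev g ((f # es) ! i)" using H unfolding reduced_def
      by (metis nth_Cons_Suc)
  qed
  ultimately show "f \<noteq> rev g e \<and> reduced g (f # es)" by simp
next
  assume H: "f \<noteq> rev g e \<and> reduced g (f # es)"
  show "reduced g (e # f # es)" unfolding reduced_def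
  proof (intro allI impI)
    fix i assume i: "Suc i < length (e # f # es)"
    show "(e # f # es) ! Suc i \<noteq> rev g ((e # f # es) ! i)"
    proof (cases i)
      case 0 thus ?thesis using H by simp
    next
      case (Suc j) thus ?thesis using H i unfolding reduced_def by auto
    qed
  qed
qed

lemma reduced_Cons: "reduced g (e # es) \<longleftrightarrow> (es \<noteq> [] \<longrightarrow> hd es \<noteq> rev g e) \<and> reduced g es"
  by (cases es) (auto simp: reduced_Cons2)

lemma reduced_append: "reduced g (p @ q) \<longleftrightarrow> reduced g p \<and> reduced g q \<and>
   (p \<noteq> [] \<and> q \<noteq> [] \<longrightarrow> hd q \<noteq> rev g (last p))"
  by (induction p) (auto simp: reduced_Cons)

lemma path_verts1: "is_path g u p v \<Longrightarrow> u \<in> verts g"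
  unfolding is_path_def by blast
lemma path_verts2: "is_path g u p v \<Longrightarrow> v \<in> verts g"
  unfolding is_path_def by blast

lemma path_append:
  assumes "is_sgraph g"
  shows "is_path g u (p @ q) w \<longleftrightarrow> (\<exists>v. is_path g u p v \<and> is_path g v q w)"
  using assms by (induction p arbitrary: u) (auto simp: path_Cons dest: path_verts1)

lemma path_last:
  assumes "is_sgraph g" "is_path g u p v" "is_path g u p w" shows "v = w"
  using assms by (induction p arbitrary: u) (auto simp: path_Cons)


lemma sg_rev: assumes "is_sgraph g" "e \<in> arcs g"
  shows "rev g e \<in> arcs g" "rev g (rev g e) = e" "rev g e \<noteq> e" "src g e \<in> verts g"
    "tgt g (rev g e) = src g e" "src g (rev g e) = tgt g e"
  using assms unfolding is_sgraph_def tgt_def by auto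

definition revp :: "('v, 'e, 'z) sgraph_scheme \<Rightarrow> 'e list \<Rightarrow> 'e list" where
  "revp g p = List.rev (map (rev g) p)"

lemma revp_Nil[simp]: "revp g [] = []" and revp_Cons: "revp g (e # p) = revp g p @ [rev g e]"
  unfolding revp_def by auto

lemma path_revp:
  assumes "is_sgraph g" "is_path g u p v" shows "is_path g v (revp g p) u"
  using assms(2)
proof (induction p arbitrary: u)
  case Nil thus ?case by auto
next
  case (Cons e p)
  hence e: "e \<in> arcs g" "src g e = u" "is_path g (tgt g e) p v" using path_Cons[OF assms(1)] by auto
  have "is_path g v (revp g p) (tgt g e)" using Cons.IH e by simp
  moreover have "is_path g (tgt g e) [rev g e] u"
    using e sg_rev[OF assms(1) e(1)] assms(1) by (simp add: path_Cons)
  ultimately show ?case by (auto simp: revp_Cons path_append[OF assms(1)])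
qed

lemma reduced_revp:
  assumes "is_sgraph g" "set p \<subseteq> arcs g" "reduced g p" shows "reduced g (revp g p)"
  using assms(2,3)
proof (induction p)
  case Nil thus ?case by simp
next
  case (Cons e p)
  have r: "reduced g (revp g p)" using Cons by (simp add: reduced_Cons)
  show ?case
  proof (cases p)
    case Nil thus ?thesis by (simp add: revp_Cons)
  next
    case (Cons f p')
    have "last (revp g p) = rev g f" using Cons by (simp add: revp_Cons)
    moreover have "f \<noteq> rev g e" using Cons \<open>reduced g (e # p)\<close> by (simp add: reduced_Cons2)
    moreover have "f \<in> arcs g" "e \<in> arcs g" using Cons \<open>set (e # p) \<subseteq> arcs g\<close> by auto
    ultimately have "rev g e \<noteq> rev g (last (revp g p))" using sg_rev[OF assms(1)] by metis
    thus ?thesis unfolding revp_Cons[of g e p] reduced_append using r by simp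
  qed
qed

lemma length_revp[simp]: "length (revp g p) = length p" unfolding revp_def by simp

lemma path_arcs: "is_path g u p v \<Longrightarrow> set p \<subseteq> arcs g" unfolding is_path_def by auto

lemma exists_reduced:
  assumes "is_sgraph g" "is_path g u p v"
  shows "\<exists>q. is_path g u q v \<and> reduced g q \<and> set q \<subseteq> set p"
  using assms(2)
proof (induction p arbitrary: u)
  case Nil thus ?case by auto
next
  case (Cons e p)
  hence e: "e \<in> arcs g" "src g e = u" "is_path g (tgt g e) p v" using path_Cons[OF assms(1)] by auto
  then obtain q where q: "is_path g (tgt g e) q v" "reduced g q" "set q \<subseteq> set p" using Cons.IH by blast
  show ?case
  proof (cases "q \<noteq> [] \<and> hd q = rev g e")
    case True
    then obtain q' where qq: "q = rev g e # q'" by (cases q) auto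
    hence "is_path g (tgt g (rev g e)) q' v" using q(1) path_Cons[OF assms(1)] by auto
    hence "is_path g u q' v" using sg_rev[OF assms(1) e(1)] e by simp
    thus ?thesis using q qq by (auto simp: reduced_Cons)
  next
    case False
    hence "reduced g (e # q)" using q by (auto simp add: reduced_Cons)
    moreover have "is_path g u (e # q) v" using e q path_Cons[OF assms(1)] by auto
    ultimately show ?thesis using q by (intro exI[of _ "e#q"]) auto
  qed
qed

lemma path_snoc:
  assumes "is_sgraph g"
  shows "is_path g u (p @ [e]) w \<longleftrightarrow> is_path g u p (src g e) \<and> e \<in> arcs g \<and> tgt g e = w"
proof -
  have "e \<in> arcs g \<Longrightarrow> tgt g e \<in> verts g" using sg_rev[OF assms] by metis
  thus ?thesis using assms by (auto simp: path_append path_Cons)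
qed

lemma tree_unique:
  assumes "is_tree g" "is_path g u p v" "reduced g p" "is_path g u q v" "reduced g q"
  shows "p = q"
  using assms(2-5)
proof (induction "length p" arbitrary: p q v rule: less_induct)
  case less
  have sg: "is_sgraph g" using assms(1) unfolding is_tree_def by auto
  have nocirc: "\<And>w es. is_path g w es w \<Longrightarrow> reduced g es \<Longrightarrow> es = []"
    using assms(1) unfolding is_tree_def by auto
  show ?case
  proof (cases "p = [] \<or> q = []")
    case True
    thus ?thesis using less.prems nocirc path_last[OF sg] by (metis path_Nil)
  next
    case False
    then obtain p' a q' b where pq: "p = p' @ [a]" "q = q' @ [b]"
      by (metis rev_exhaust)
    have pa: "is_path g u p' (src g a)" "a \<in> arcs g" "tgt g a = v"
      using less.prems(1) pq path_snoc[OF sg] by auto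
    have qb: "is_path g u q' (src g b)" "b \<in> arcs g" "tgt g b = v"
      using less.prems(3) pq path_snoc[OF sg] by auto
    show ?thesis
    proof (cases "a = b")
      case True
      have "p' = q'"
        apply (rule less.hyps[where v = "src g a"])
        using pa qb True pq less.prems by (auto simp add: reduced_append)
      thus ?thesis using pq True by simp
    next
      case False
      have c: "is_path g u (p @ revp g q) u"
        using less.prems path_revp[OF sg] path_append[OF sg] by blast
      have rq: "reduced g (revp g q)" using reduced_revp[OF sg path_arcs[OF less.prems(3)] less.prems(4)] .
      have "hd (revp g q) = rev g b" using pq by (simp add: revp_def)
      moreover have "rev g b \<noteq> rev g a" using False sg_rev[OF sg] pa qb by metis
      moreover have "last p = a" "revp g q \<noteq> []" "p \<noteq> []" using pq by (auto simp: revp_def)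
      ultimately have "reduced g (p @ revp g q)" using rq less.prems(2)
        unfolding reduced_append by auto
      thus ?thesis using nocirc c pq by auto
    qed
  qed
qed

lemma tree_path_exists:
  assumes "is_tree g" "u \<in> verts g" "v \<in> verts g"
  shows "\<exists>p. is_path g u p v \<and> reduced g p"
proof -
  have sg: "is_sgraph g" using assms(1) unfolding is_tree_def by auto
  obtain p where "is_path g u p v" using assms unfolding is_tree_def connected_sg_def by blast
  thus ?thesis using exists_reduced[OF sg] by blast
qed



lemma subg_simps[simp]: "verts (subg g V E) = V" "arcs (subg g V E) = E"
  "src (subg g V E) = src g" "rev (subg g V E) = rev g"
  unfolding subg_def by auto

lemma tgt_subg[simp]: "tgt (subg g V E) = tgt g" unfolding tgt_def by auto

lemma path_subg:
  assumes "V \<subseteq> verts g" "E \<subseteq> arcs g"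
  shows "is_path (subg g V E) u p v \<longleftrightarrow> is_path g u p v \<and> set p \<subseteq> E \<and> u \<in> V \<and> v \<in> V"
  using assms unfolding is_path_def by auto

lemma reduced_subg[simp]: "reduced (subg g V E) p \<longleftrightarrow> reduced g p"
  unfolding reduced_def by simp

locale tsetup =
  fixes G :: "('g, 'b) monoid_scheme" and H :: "'g set"
    and T :: "('v, 'e) sgraph"
    and \<phi> :: "'g \<Rightarrow> 'v \<Rightarrow> 'v" and \<psi> :: "'g \<Rightarrow> 'e \<Rightarrow> 'e"
  assumes ta: "tree_action G T \<phi> \<psi>"
    and wi: "without_inversions G T \<psi>"
    and sub: "subgroup H G"
    and fr: "acts_freely_on_edges G H T \<psi>"
begin

lemma grp: "group G" and tree: "is_tree T" and sg: "is_sgraph T"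
  and actV: "group_action G (verts T) \<phi>" and actE: "group_action G (arcs T) \<psi>"
  using ta unfolding tree_action_def is_tree_def by auto

lemma compat: "g \<in> carrier G \<Longrightarrow> e \<in> arcs T \<Longrightarrow> src T (\<psi> g e) = \<phi> g (src T e)"
  "g \<in> carrier G \<Longrightarrow> e \<in> arcs T \<Longrightarrow> \<psi> g (rev T e) = rev T (\<psi> g e)"
  using ta unfolding tree_action_def by auto

lemma Hc: "h \<in> H \<Longrightarrow> h \<in> carrier G" using subgroup.subset[OF sub] by (rule subsetD)
lemma H1: "\<one>\<^bsub>G\<^esub> \<in> H" by (rule subgroup.one_closed[OF sub])
lemma Hm: "g \<in> H \<Longrightarrow> h \<in> H \<Longrightarrow> g \<otimes>\<^bsub>G\<^esub> h \<in> H" by (rule subgroup.m_closed[OF sub])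
lemma Hi: "g \<in> H \<Longrightarrow> inv\<^bsub>G\<^esub> g \<in> H" by (rule subgroup.m_inv_closed[OF sub])

lemma phi_one: assumes "v \<in> verts T" shows "\<phi> \<one>\<^bsub>G\<^esub> v = v"
proof -
  have "\<phi> \<one>\<^bsub>G\<^esub> = (\<lambda>x\<in>verts T. x)" using group_action.id_eq_one[OF actV] by simp
  thus ?thesis using assms by simp
qed
lemma psi_one: assumes "e \<in> arcs T" shows "\<psi> \<one>\<^bsub>G\<^esub> e = e"
proof -
  have "\<psi> \<one>\<^bsub>G\<^esub> = (\<lambda>x\<in>arcs T. x)" using group_action.id_eq_one[OF actE] by simp
  thus ?thesis using assms by simp
qed

lemma phi_closed: "g \<in> carrier G \<Longrightarrow> v \<in> verts T \<Longrightarrow> \<phi> g v \<in> verts T"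
  by (rule group_action.element_image[OF actV], assumption+, rule refl)
lemma psi_closed: "g \<in> carrier G \<Longrightarrow> e \<in> arcs T \<Longrightarrow> \<psi> g e \<in> arcs T"
  by (rule group_action.element_image[OF actE], assumption+, rule refl)

lemma phi_comp: "v \<in> verts T \<Longrightarrow> g \<in> carrier G \<Longrightarrow> h \<in> carrier G \<Longrightarrow> \<phi> (g \<otimes>\<^bsub>G\<^esub> h) v = \<phi> g (\<phi> h v)"
  by (rule group_action.composition_rule[OF actV])
lemma psi_comp: "e \<in> arcs T \<Longrightarrow> g \<in> carrier G \<Longrightarrow> h \<in> carrier G \<Longrightarrow> \<psi> (g \<otimes>\<^bsub>G\<^esub> h) e = \<psi> g (\<psi> h e)"
  by (rule group_action.composition_rule[OF actE])

lemma inv_c: "g \<in> carrier G \<Longrightarrow> inv\<^bsub>G\<^esub> g \<in> carrier G"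
  by (rule group.inv_closed[OF grp])

lemma phi_inv: assumes "v \<in> verts T" "g \<in> carrier G" shows "\<phi> (inv\<^bsub>G\<^esub> g) (\<phi> g v) = v"
proof -
  have "\<phi> (inv\<^bsub>G\<^esub> g) (\<phi> g v) = \<phi> (inv\<^bsub>G\<^esub> g \<otimes>\<^bsub>G\<^esub> g) v"
    using phi_comp[OF assms(1) inv_c[OF assms(2)] assms(2)] by simp
  also have "\<dots> = v" using group.l_inv[OF grp assms(2)] phi_one[OF assms(1)] by simp
  finally show ?thesis .
qed
lemma phi_inv2: assumes "v \<in> verts T" "g \<in> carrier G" shows "\<phi> g (\<phi> (inv\<^bsub>G\<^esub> g) v) = v"
proof -
  have "\<phi> g (\<phi> (inv\<^bsub>G\<^esub> g) v) = \<phi> (g \<otimes>\<^bsub>G\<^esub> inv\<^bsub>G\<^esub> g) v"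
    using phi_comp[OF assms(1) assms(2) inv_c[OF assms(2)]] by simp
  also have "\<dots> = v" using group.r_inv[OF grp assms(2)] phi_one[OF assms(1)] by simp
  finally show ?thesis .
qed

lemma free: "h \<in> H \<Longrightarrow> e \<in> arcs T \<Longrightarrow> \<psi> h e = e \<Longrightarrow> h = \<one>\<^bsub>G\<^esub>"
  using fr unfolding acts_freely_on_edges_def by auto

lemma psi_tgt: assumes "g \<in> carrier G" "e \<in> arcs T" shows "tgt T (\<psi> g e) = \<phi> g (tgt T e)"
proof -
  have "tgt T (\<psi> g e) = src T (\<psi> g (rev T e))" unfolding tgt_def using compat(2)[OF assms] by simp
  also have "\<dots> = \<phi> g (src T (rev T e))" using compat(1)[OF assms(1) sg_rev(1)[OF sg assms(2)]] .
  finally show ?thesis unfolding tgt_def .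
qed

lemma path_map:
  assumes "g \<in> carrier G" "is_path T u p v"
  shows "is_path T (\<phi> g u) (map (\<psi> g) p) (\<phi> g v)"
  using assms(2)
proof (induction p arbitrary: u)
  case Nil thus ?case using phi_closed[OF assms(1)] by auto
next
  case (Cons e p)
  hence e: "e \<in> arcs T" "src T e = u" "is_path T (tgt T e) p v" using path_Cons[OF sg] by auto
  show ?case using Cons.IH[OF e(3)] e psi_closed[OF assms(1)] compat[OF assms(1)] psi_tgt[OF assms(1)]
    by (simp add: path_Cons[OF sg])
qed

lemma reduced_map:
  assumes "g \<in> carrier G" "set p \<subseteq> arcs T" "reduced T p"
  shows "reduced T (map (\<psi> g) p)"
  using assms(2,3)
proof (induction p)
  case Nil thus ?case by simp
next
  case (Cons e p)
  show ?case
  proof (cases p)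
    case Nil thus ?thesis by simp
  next
    case (Cons f p')
    have ef: "e \<in> arcs T" "f \<in> arcs T" using Cons \<open>set (e # p) \<subseteq> arcs T\<close> by auto
    have "f \<noteq> rev T e" using Cons \<open>reduced T (e # p)\<close> by (simp add: reduced_Cons2)
    hence "\<psi> g f \<noteq> \<psi> g (rev T e)"
      using group_action.inj_prop[OF actE assms(1)] ef sg_rev[OF sg ef(1)] by (meson inj_on_eq_iff)
    hence "\<psi> g f \<noteq> rev T (\<psi> g e)" using compat(2)[OF assms(1) ef(1)] by simp
    moreover have "reduced T (map (\<psi> g) p)" using Cons.IH Cons.prems by (simp add: reduced_Cons)
    ultimately show ?thesis using Cons by (simp add: reduced_Cons2)
  qed
qed

lemma fix_unique:
  assumes "g \<in> H" "g \<noteq> \<one>\<^bsub>G\<^esub>" "u \<in> verts T" "w \<in> verts T" "\<phi> g u = u" "\<phi> g w = w"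
  shows "u = w"
proof -
  obtain p where p: "is_path T u p w" "reduced T p" using tree_path_exists[OF tree assms(3,4)] by blast
  have "is_path T u (map (\<psi> g) p) w" using path_map[OF Hc[OF assms(1)] p(1)] assms by simp
  moreover have "reduced T (map (\<psi> g) p)" using reduced_map[OF Hc[OF assms(1)] path_arcs[OF p(1)] p(2)] .
  ultimately have eq: "map (\<psi> g) p = p" using tree_unique[OF tree] p by metis
  show ?thesis
  proof (cases p)
    case Nil thus ?thesis using p by auto
  next
    case (Cons e p')
    hence "\<psi> g e = e" "e \<in> arcs T" using eq path_arcs[OF p(1)] by auto
    thus ?thesis using free assms by blast
  qed
qed

lemma double_path:
  assumes "g \<in> H" "g \<noteq> \<one>\<^bsub>G\<^esub>" "\<phi> g u = u" "is_path T x a u" "reduced T a" "a \<noteq> []"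
  shows "is_path T x (a @ map (\<psi> g) (revp T a)) (\<phi> g x) \<and> reduced T (a @ map (\<psi> g) (revp T a))"
proof -
  have gc: "g \<in> carrier G" using Hc assms by blast
  have r: "is_path T u (revp T a) x" using path_revp[OF sg assms(4)] .
  have "is_path T u (map (\<psi> g) (revp T a)) (\<phi> g x)" using path_map[OF gc r] assms(3) by simp
  hence P: "is_path T x (a @ map (\<psi> g) (revp T a)) (\<phi> g x)" using assms(4) path_append[OF sg] by blast
  have ra: "set (revp T a) \<subseteq> arcs T" using path_arcs[OF r] .
  have R1: "reduced T (map (\<psi> g) (revp T a))"
    using reduced_map[OF gc ra reduced_revp[OF sg path_arcs[OF assms(4)] assms(5)]] .
  obtain a' l where al: "a = a' @ [l]" using assms(6) by (metis rev_exhaust)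
  have l: "l \<in> arcs T" using path_arcs[OF assms(4)] al by auto
  have hd: "hd (map (\<psi> g) (revp T a)) = \<psi> g (rev T l)" using al by (simp add: revp_def)
  have "\<psi> g (rev T l) \<noteq> rev T l" using free[OF assms(1) sg_rev(1)[OF sg l]] assms(2) by blast
  hence "hd (map (\<psi> g) (revp T a)) \<noteq> rev T (last a)" using hd al by simp
  moreover have "map (\<psi> g) (revp T a) \<noteq> []" using assms(6) by (simp add: revp_def)
  ultimately have "reduced T (a @ map (\<psi> g) (revp T a))" using R1 assms(5,6) reduced_append by blast
  thus ?thesis using P by blast
qed

lemma same_fix:
  assumes "g \<in> H" "g \<noteq> \<one>\<^bsub>G\<^esub>" "h \<in> H" "h \<noteq> \<one>\<^bsub>G\<^esub>"
    "u \<in> verts T" "w \<in> verts T" "\<phi> g u = u" "\<phi> h w = w"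
    "x \<in> verts T" "\<phi> g x = \<phi> h x"
  shows "u = w"
proof -
  obtain a where a: "is_path T x a u" "reduced T a" using tree_path_exists[OF tree assms(9,5)] by blast
  obtain b where b: "is_path T x b w" "reduced T b" using tree_path_exists[OF tree assms(9,6)] by blast
  show ?thesis
  proof (cases "a = [] \<or> b = []")
    case True
    thus ?thesis
    proof
      assume "a = []"
      hence "x = u" using a by auto
      hence "\<phi> h u = u" using assms by simp
      thus ?thesis using fix_unique[OF assms(3,4,5,6)] assms by blast
    next
      assume "b = []"
      hence "x = w" using b by auto
      hence "\<phi> g w = w" using assms by simp
      thus ?thesis using fix_unique[OF assms(1,2,5,6)] assms by blast
    qed
  next
    case False
    have A: "is_path T x (a @ map (\<psi> g) (revp T a)) (\<phi> g x) \<and> reduced T (a @ map (\<psi> g) (revp T a))"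
      using double_path[OF assms(1,2,7) a] False by blast
    have B: "is_path T x (b @ map (\<psi> h) (revp T b)) (\<phi> g x) \<and> reduced T (b @ map (\<psi> h) (revp T b))"
      using double_path[OF assms(3,4,8) b] False assms(10) by simp
    have eq: "a @ map (\<psi> g) (revp T a) = b @ map (\<psi> h) (revp T b)"
      using tree_unique[OF tree] A B by blast
    have "length (a @ map (\<psi> g) (revp T a)) = length (b @ map (\<psi> h) (revp T b))" using eq by simp
    hence "length a + length a = length b + length b" by simp
    hence "length a = length b" by simp
    hence "a = b" using eq by (simp add: append_eq_append_conv)
    thus ?thesis using a b path_last[OF sg] by blast
  qed
qed

lemma case1:
  assumes "\<not> has_hyperbolic H T \<phi>"
  shows "\<exists>v \<in> verts T. \<forall>h \<in> H. \<phi> h v = v"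
proof (cases "\<forall>h \<in> H. h = \<one>\<^bsub>G\<^esub>")
  case True
  obtain v where v: "v \<in> verts T" using tree unfolding is_tree_def by blast
  have "\<forall>h\<in>H. \<phi> h v = v" using True phi_one[OF v] by auto
  thus ?thesis using v by blast
next
  case False
  then obtain g where g: "g \<in> H" "g \<noteq> \<one>\<^bsub>G\<^esub>" by blast
  have ell: "\<And>k. k \<in> H \<Longrightarrow> \<exists>v \<in> verts T. \<phi> k v = v"
    using assms unfolding has_hyperbolic_def hyperbolic_def by blast
  obtain u where u: "u \<in> verts T" "\<phi> g u = u" using ell[OF g(1)] by blast
  have "\<forall>h \<in> H. \<phi> h u = u"
  proof
    fix h assume h: "h \<in> H"
    show "\<phi> h u = u"
    proof (cases "h = \<one>\<^bsub>G\<^esub>")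
      case True thus ?thesis using phi_one u by simp
    next
      case False
      obtain w where w: "w \<in> verts T" "\<phi> h w = w" using ell[OF h] by blast
      have kH: "inv\<^bsub>G\<^esub> h \<otimes>\<^bsub>G\<^esub> g \<in> H" using Hm Hi g h by blast
      obtain x where x: "x \<in> verts T" "\<phi> (inv\<^bsub>G\<^esub> h \<otimes>\<^bsub>G\<^esub> g) x = x" using ell[OF kH] by blast
      have hc: "h \<in> carrier G" "g \<in> carrier G" using Hc h g by auto
      have "\<phi> (inv\<^bsub>G\<^esub> h) (\<phi> g x) = x"
        using x phi_comp[OF x(1) inv_c[OF hc(1)] hc(2)] by simp
      hence "\<phi> h (\<phi> (inv\<^bsub>G\<^esub> h) (\<phi> g x)) = \<phi> h x" by simp
      hence "\<phi> h x = \<phi> g x" using phi_inv2[OF phi_closed[OF hc(2) x(1)] hc(1)] by simp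
      hence "u = w" using same_fix[OF g h False u(1) w(1) u(2) w(2) x(1)] by simp
      thus ?thesis using w by simp
    qed
  qed
  thus ?thesis using u by blast
qed

end


lemma (in group_action) horb_self:
  assumes "subgroup H G" "x \<in> E" shows "x \<in> horb H \<phi> x"
proof -
  have "\<phi> \<one> = (\<lambda>x\<in>E. x)" using id_eq_one by simp
  hence "\<phi> \<one> x = x" using assms(2) by simp
  thus ?thesis unfolding horb_def using subgroup.one_closed[OF assms(1)] by (metis image_eqI)
qed

lemma (in group_action) horb_sub:
  assumes "subgroup H G" "x \<in> E" shows "horb H \<phi> x \<subseteq> E"
  unfolding horb_def using subgroup.subset[OF assms(1)] element_image assms(2) by auto

lemma (in group_action) horb_act:
  assumes "group G" "subgroup H G" "h \<in> H" "x \<in> E"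
  shows "horb H \<phi> (\<phi> h x) = horb H \<phi> x"
proof -
  have hc: "h \<in> carrier G" using subgroup.subset[OF assms(2)] assms(3) by auto
  have ic: "inv h \<in> H" using subgroup.m_inv_closed[OF assms(2) assms(3)] .
  have ic2: "inv h \<in> carrier G" using group.inv_closed[OF assms(1) hc] .
  show ?thesis unfolding horb_def
  proof (rule equalityI)
    show "(\<lambda>k. \<phi> k (\<phi> h x)) ` H \<subseteq> (\<lambda>k. \<phi> k x) ` H"
    proof (rule image_subsetI)
      fix k assume k: "k \<in> H"
      have kc: "k \<in> carrier G" using subgroup.subset[OF assms(2)] k by auto
      have "\<phi> k (\<phi> h x) = \<phi> (k \<otimes> h) x" using composition_rule[OF assms(4) kc hc] by simp
      moreover have "k \<otimes> h \<in> H" using subgroup.m_closed[OF assms(2) k assms(3)] .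
      ultimately show "\<phi> k (\<phi> h x) \<in> (\<lambda>k. \<phi> k x) ` H" by (metis image_eqI)
    qed
  next
    show "(\<lambda>k. \<phi> k x) ` H \<subseteq> (\<lambda>k. \<phi> k (\<phi> h x)) ` H"
    proof (rule image_subsetI)
      fix k assume k: "k \<in> H"
      have kc: "k \<in> carrier G" using subgroup.subset[OF assms(2)] k by auto
      have hx: "\<phi> h x \<in> E" using element_image[OF hc assms(4)] by simp
      have "\<phi> (k \<otimes> inv h) (\<phi> h x) = \<phi> k (\<phi> (inv h) (\<phi> h x))"
        using composition_rule[OF hx kc ic2] by simp
      also have "\<phi> (inv h) (\<phi> h x) = \<phi> (inv h \<otimes> h) x" using composition_rule[OF assms(4) ic2 hc] by simp
      also have "\<dots> = \<phi> \<one> x" using group.l_inv[OF assms(1) hc] by simp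
      also have "\<dots> = x" using id_eq_one assms(4) by (metis restrict_apply')
      finally have "\<phi> k x = \<phi> (k \<otimes> inv h) (\<phi> h x)" by simp
      moreover have "k \<otimes> inv h \<in> H" using subgroup.m_closed[OF assms(2) k ic] .
      ultimately show "\<phi> k x \<in> (\<lambda>k. \<phi> k (\<phi> h x)) ` H" by (metis image_eqI)
    qed
  qed
qed

lemma (in group_action) horb_eq:
  assumes "subgroup H G" "x \<in> E" "y \<in> E" "horb H \<phi> y = horb H \<phi> x"
  shows "\<exists>h\<in>H. y = \<phi> h x"
proof -
  have "y \<in> horb H \<phi> x" using horb_self[OF assms(1,3)] assms(4) by simp
  thus ?thesis unfolding horb_def by auto
qed

fun pv :: "('v, 'e) sgraph \<Rightarrow> 'v \<Rightarrow> 'e list \<Rightarrow> 'v list" where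
  "pv g u [] = [u]"
| "pv g u (e # p) = u # pv g (tgt g e) p"

lemma pv_prefix:
  assumes "is_sgraph g" "is_path g u p v" "w \<in> set (pv g u p)"
  shows "\<exists>q. is_path g u q w \<and> set q \<subseteq> set p"
  using assms(2,3)
proof (induction p arbitrary: u)
  case Nil thus ?case by (intro exI[of _ "[]"]) auto
next
  case (Cons e p)
  hence e: "e \<in> arcs g" "src g e = u" "is_path g (tgt g e) p v" using path_Cons[OF assms(1)] by auto
  show ?case
  proof (cases "w = u")
    case True thus ?thesis using path_verts1[OF Cons.prems(1)] by (intro exI[of _ "[]"]) auto
  next
    case False
    hence "w \<in> set (pv g (tgt g e) p)" using Cons.prems by simp
    then obtain q where "is_path g (tgt g e) q w" "set q \<subseteq> set p" using Cons.IH e by blast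
    thus ?thesis using e by (intro exI[of _ "e # q"]) (auto simp: path_Cons[OF assms(1)])
  qed
qed

lemma pv_edges:
  assumes "is_sgraph g" "is_path g u p v" "e \<in> set p"
  shows "src g e \<in> set (pv g u p) \<and> tgt g e \<in> set (pv g u p)"
  using assms(2,3)
proof (induction p arbitrary: u)
  case Nil thus ?case by simp
next
  case (Cons f p)
  hence f: "f \<in> arcs g" "src g f = u" "is_path g (tgt g f) p v" using path_Cons[OF assms(1)] by auto
  show ?case
  proof (cases "e = f")
    case True thus ?thesis using f by (cases p) auto
  next
    case False thus ?thesis using Cons f by auto
  qed
qed

lemma pv_last: "is_sgraph g \<Longrightarrow> is_path g u p v \<Longrightarrow> v \<in> set (pv g u p)"
  by (induction p arbitrary: u) (auto simp: path_Cons)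

lemma pv_verts: "is_sgraph g \<Longrightarrow> is_path g u p v \<Longrightarrow> set (pv g u p) \<subseteq> verts g"
proof (induction p arbitrary: u)
  case Nil thus ?case by auto
next
  case (Cons e p) thus ?case using path_verts1 sg_rev(4) by (auto simp: path_Cons)
qed

lemma set_revp: "set (revp g p) = rev g ` set p" unfolding revp_def by auto

lemma finite_subtree:
  assumes "is_tree g" "finite S" "S \<subseteq> verts g" "b \<in> S"
  shows "\<exists>W E0. finite W \<and> finite E0 \<and> S \<subseteq> W \<and> W \<subseteq> verts g \<and> E0 \<subseteq> arcs g \<and>
     (\<forall>e\<in>E0. src g e \<in> W \<and> rev g e \<in> E0) \<and>
     (\<forall>a\<in>W. \<forall>c\<in>W. \<exists>p. is_path g a p c \<and> reduced g p \<and> set p \<subseteq> E0)"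
proof -
  have sg: "is_sgraph g" using assms(1) unfolding is_tree_def by auto
  have "\<forall>s\<in>S. \<exists>p. is_path g b p s" using assms unfolding is_tree_def connected_sg_def by blast
  from bchoice[OF this] obtain P where P0: "\<forall>s\<in>S. is_path g b (P s) s" by blast
  hence P: "\<And>s. s \<in> S \<Longrightarrow> is_path g b (P s) s" by blast
  define E1 where "E1 = (\<Union>s\<in>S. set (P s))"
  define E0 where "E0 = E1 \<union> rev g ` E1"
  define W where "W = (\<Union>s\<in>S. set (pv g b (P s)))"
  have fE1: "finite E1" unfolding E1_def using assms(2) by auto
  have E1a: "E1 \<subseteq> arcs g"
  proof
    fix e assume "e \<in> E1"
    then obtain s where s: "s \<in> S" "e \<in> set (P s)" unfolding E1_def by blast
    show "e \<in> arcs g" using path_arcs[OF P[OF s(1)]] s(2) by (rule subsetD)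
  qed
  have W1: "S \<subseteq> W"
  proof
    fix s assume s: "s \<in> S"
    have "s \<in> set (pv g b (P s))" using pv_last[OF sg P[OF s]] .
    thus "s \<in> W" unfolding W_def using s by (rule UN_I[rotated])
  qed
  have W2: "W \<subseteq> verts g"
  proof
    fix w assume "w \<in> W"
    then obtain s where s: "s \<in> S" "w \<in> set (pv g b (P s))" unfolding W_def by blast
    show "w \<in> verts g" using pv_verts[OF sg P[OF s(1)]] s(2) by (rule subsetD)
  qed
  have E0a: "E0 \<subseteq> arcs g" unfolding E0_def using E1a sg_rev(1)[OF sg] by blast
  have inW: "\<And>s w. s \<in> S \<Longrightarrow> w \<in> set (pv g b (P s)) \<Longrightarrow> w \<in> W"
    unfolding W_def by (rule UN_I)
  have E0c: "\<forall>e\<in>E0. src g e \<in> W \<and> rev g e \<in> E0"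
  proof
    fix e assume e: "e \<in> E0"
    show "src g e \<in> W \<and> rev g e \<in> E0"
    proof (cases "e \<in> E1")
      case True
      then obtain s where s: "s \<in> S" "e \<in> set (P s)" unfolding E1_def by blast
      have "src g e \<in> W" using inW[OF s(1)] pv_edges[OF sg P[OF s(1)] s(2)] by simp
      moreover have "rev g e \<in> E0" unfolding E0_def using True by (intro UnI2 imageI)
      ultimately show ?thesis by simp
    next
      case False
      then obtain f where f: "f \<in> E1" "e = rev g f" using e unfolding E0_def by blast
      then obtain s where s: "s \<in> S" "f \<in> set (P s)" unfolding E1_def by blast
      have fa: "f \<in> arcs g" using f E1a by blast
      have "src g e = tgt g f" using f sg_rev(6)[OF sg fa] by simp
      hence "src g e \<in> W" using inW[OF s(1)] pv_edges[OF sg P[OF s(1)] s(2)] by simp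
      moreover have "rev g e = f" using f sg_rev(2)[OF sg fa] by simp
      hence "rev g e \<in> E0" unfolding E0_def using f(1) by simp
      ultimately show ?thesis by simp
    qed
  qed
  have reach: "\<And>a. a \<in> W \<Longrightarrow> \<exists>q. is_path g b q a \<and> set q \<subseteq> E1"
  proof -
    fix a assume "a \<in> W"
    then obtain s where s: "s \<in> S" "a \<in> set (pv g b (P s))" unfolding W_def by blast
    then obtain q where "is_path g b q a" "set q \<subseteq> set (P s)" using pv_prefix[OF sg P[OF s(1)]] by blast
    thus "\<exists>q. is_path g b q a \<and> set q \<subseteq> E1" using s unfolding E1_def by blast
  qed
  have conn: "\<forall>a\<in>W. \<forall>c\<in>W. \<exists>p. is_path g a p c \<and> reduced g p \<and> set p \<subseteq> E0"
  proof (intro ballI)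
    fix a c assume a: "a \<in> W" and c: "c \<in> W"
    obtain qa where qa: "is_path g b qa a" "set qa \<subseteq> E1" using reach[OF a] by blast
    obtain qc where qc: "is_path g b qc c" "set qc \<subseteq> E1" using reach[OF c] by blast
    have "is_path g a (revp g qa @ qc) c" using path_revp[OF sg qa(1)] qc(1) path_append[OF sg] by blast
    moreover have "set (revp g qa @ qc) \<subseteq> E0" using qa(2) qc(2) unfolding E0_def by (auto simp: set_revp)
    moreover note exists_reduced[OF sg calculation(1)]
    ultimately show "\<exists>p. is_path g a p c \<and> reduced g p \<and> set p \<subseteq> E0"
      by (meson order_trans)
  qed
  have fW: "finite W" unfolding W_def using assms(2) by auto
  have fE0: "finite E0" unfolding E0_def using fE1 by auto
  show ?thesis
    by (intro exI[of _ W] exI[of _ E0] conjI) (rule fW fE0 W1 W2 E0a E0c conn)+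
qed

context tsetup
begin

abbreviation "Q \<equiv> quot_graph H T \<phi> \<psi>"
abbreviation "cv \<equiv> horb H \<phi>"
abbreviation "ce \<equiv> horb H \<psi>"
abbreviation "NQ \<equiv> nondeg_quot_verts H T \<phi> \<psi>"

lemma Q_simps: "verts Q = cv ` verts T" "arcs Q = ce ` arcs T"
  unfolding quot_graph_def by simp_all

lemma cv_self: "v \<in> verts T \<Longrightarrow> v \<in> cv v" using group_action.horb_self[OF actV sub] .
lemma ce_self: "e \<in> arcs T \<Longrightarrow> e \<in> ce e" using group_action.horb_self[OF actE sub] .
lemma cv_act: "h \<in> H \<Longrightarrow> v \<in> verts T \<Longrightarrow> cv (\<phi> h v) = cv v"
  using group_action.horb_act[OF actV grp sub] .
lemma ce_act: "h \<in> H \<Longrightarrow> e \<in> arcs T \<Longrightarrow> ce (\<psi> h e) = ce e"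
  using group_action.horb_act[OF actE grp sub] .
lemma cv_eq: "v \<in> verts T \<Longrightarrow> w \<in> verts T \<Longrightarrow> cv w = cv v \<Longrightarrow> \<exists>h\<in>H. w = \<phi> h v"
  using group_action.horb_eq[OF actV sub] .
lemma ce_eq: "e \<in> arcs T \<Longrightarrow> f \<in> arcs T \<Longrightarrow> ce f = ce e \<Longrightarrow> \<exists>h\<in>H. f = \<psi> h e"
  using group_action.horb_eq[OF actE sub] .

lemma some_in_ce:
  assumes "e \<in> arcs T" obtains h where "h \<in> H" "(SOME e'. e' \<in> ce e) = \<psi> h e"
proof -
  have "(SOME e'. e' \<in> ce e) \<in> ce e" using ce_self[OF assms] by (rule someI)
  thus ?thesis using that unfolding horb_def by auto
qed

lemma src_Q: assumes "e \<in> arcs T" shows "src Q (ce e) = cv (src T e)"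
proof -
  obtain h where h: "h \<in> H" "(SOME e'. e' \<in> ce e) = \<psi> h e" using some_in_ce[OF assms] by blast
  have "src Q (ce e) = cv (src T (\<psi> h e))" using h unfolding quot_graph_def by simp
  also have "\<dots> = cv (\<phi> h (src T e))" using compat(1)[OF Hc[OF h(1)] assms] by simp
  also have "\<dots> = cv (src T e)" using cv_act[OF h(1) sg_rev(4)[OF sg assms]] .
  finally show ?thesis .
qed

lemma rev_Q: assumes "e \<in> arcs T" shows "rev Q (ce e) = ce (rev T e)"
proof -
  obtain h where h: "h \<in> H" "(SOME e'. e' \<in> ce e) = \<psi> h e" using some_in_ce[OF assms] by blast
  have "rev Q (ce e) = ce (rev T (\<psi> h e))" using h unfolding quot_graph_def by simp
  also have "\<dots> = ce (\<psi> h (rev T e))" using compat(2)[OF Hc[OF h(1)] assms] by simp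
  also have "\<dots> = ce (rev T e)" using ce_act[OF h(1) sg_rev(1)[OF sg assms]] .
  finally show ?thesis .
qed

lemma sgQ: "is_sgraph Q"
  unfolding is_sgraph_def
proof
  fix c assume "c \<in> arcs Q"
  then obtain e where e: "e \<in> arcs T" "c = ce e" using Q_simps by auto
  have re: "rev T e \<in> arcs T" "rev T (rev T e) = e" using sg_rev[OF sg e(1)] by auto
  have "src Q c \<in> verts Q" using src_Q[OF e(1)] e sg_rev(4)[OF sg e(1)] Q_simps by auto
  moreover have "rev Q c \<in> arcs Q" using rev_Q[OF e(1)] e re Q_simps by auto
  moreover have "rev Q (rev Q c) = c" using rev_Q[OF e(1)] rev_Q[OF re(1)] e re by simp
  moreover have "rev Q c \<noteq> c"
  proof
    assume "rev Q c = c"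
    hence "ce (rev T e) = ce e" using rev_Q[OF e(1)] e by simp
    then obtain h where h: "h \<in> H" "rev T e = \<psi> h e" using ce_eq[OF e(1) re(1)] by blast
    thus False using wi Hc[OF h(1)] e(1) unfolding without_inversions_def by metis
  qed
  ultimately show "src Q c \<in> verts Q \<and> rev Q c \<in> arcs Q \<and> rev Q (rev Q c) = c \<and> rev Q c \<noteq> c"
    by blast
qed

lemma tgt_Q: assumes "e \<in> arcs T" shows "tgt Q (ce e) = cv (tgt T e)"
  unfolding tgt_def using rev_Q[OF assms] src_Q[OF sg_rev(1)[OF sg assms]] by simp

lemma path_proj:
  "is_path T u p v \<Longrightarrow> is_path Q (cv u) (map ce p) (cv v)"
proof (induction p arbitrary: u)
  case Nil thus ?case using Q_simps by auto
next
  case (Cons e p)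
  hence e: "e \<in> arcs T" "src T e = u" "is_path T (tgt T e) p v" using path_Cons[OF sg] by auto
  show ?case using Cons.IH[OF e(3)] e src_Q[OF e(1)] tgt_Q[OF e(1)] Q_simps
    by (auto simp: path_Cons[OF sgQ])
qed

lemma stab_trivial:
  assumes v: "v \<in> verts T" and nv: "cv v \<notin> NQ" and h: "h \<in> H" and hfix: "\<phi> h v = v"
  shows "h = \<one>\<^bsub>G\<^esub>"
proof -
  interpret G: group G by (rule grp)
  have "cv v \<in> cv ` verts T" using v by simp
  then obtain v' where v': "v' \<in> cv v" "H_degenerate H T \<phi> \<psi> v'"
    using nv unfolding nondeg_quot_verts_def by blast
  obtain g where g: "g \<in> H" "v' = \<phi> g v" using v'(1) unfolding horb_def by auto
  obtain e' where e': "e' \<in> arcs T" "src T e' = v'" "hstab H \<phi> v' = hstab H \<psi> e'"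
    using v'(2) unfolding H_degenerate_def by blast
  have gc: "g \<in> carrier G" and hc: "h \<in> carrier G" using Hc g h by auto
  define k where "k = g \<otimes>\<^bsub>G\<^esub> (h \<otimes>\<^bsub>G\<^esub> inv\<^bsub>G\<^esub> g)"
  have kH: "k \<in> H" unfolding k_def using Hm Hi g h by simp
  have "\<phi> k v' = \<phi> g (\<phi> h (\<phi> (inv\<^bsub>G\<^esub> g) (\<phi> g v)))"
    unfolding k_def g(2) using phi_comp phi_closed gc hc v inv_c by simp
  also have "\<dots> = v'" using phi_inv[OF v gc] hfix g(2) by simp
  finally have "k \<in> hstab H \<phi> v'" using kH unfolding hstab_def by simp
  hence "\<psi> k e' = e'" using e'(3) unfolding hstab_def by simp
  hence k1: "k = \<one>\<^bsub>G\<^esub>" using free[OF kH e'(1)] by simp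
  have "g \<otimes>\<^bsub>G\<^esub> h = k \<otimes>\<^bsub>G\<^esub> g" unfolding k_def using gc hc by (simp add: G.m_assoc)
  hence "g \<otimes>\<^bsub>G\<^esub> h = g" using k1 gc by simp
  thus ?thesis using gc hc by simp
qed

end



locale c2 = tsetup G H T \<phi> \<psi>
  for G :: "('g, 'b) monoid_scheme" and H :: "'g set"
    and T :: "('v, 'e) sgraph"
    and \<phi> :: "'g \<Rightarrow> 'v \<Rightarrow> 'v" and \<psi> :: "'g \<Rightarrow> 'e \<Rightarrow> 'e" +
  fixes A :: "'e set set" and W :: "'v set set" and E0 :: "'e set set"
  assumes stA: "spanning_tree (quot_graph H T \<phi> \<psi>) A"
    and NW: "nondeg_quot_verts H T \<phi> \<psi> \<subseteq> W"
    and FW: "src (quot_graph H T \<phi> \<psi>) ` (arcs (quot_graph H T \<phi> \<psi>) - A) \<subseteq> W"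
    and Wsub: "W \<subseteq> verts (quot_graph H T \<phi> \<psi>)"
    and Wne: "W \<noteq> {}"
    and E0A: "E0 \<subseteq> A"
    and E0c: "\<forall>e\<in>E0. src (quot_graph H T \<phi> \<psi>) e \<in> W \<and> rev (quot_graph H T \<phi> \<psi>) e \<in> E0"
    and conn: "\<forall>a\<in>W. \<forall>c\<in>W. \<exists>p. is_path (subg (quot_graph H T \<phi> \<psi>) (verts (quot_graph H T \<phi> \<psi>)) A) a p c
                  \<and> reduced (subg (quot_graph H T \<phi> \<psi>) (verts (quot_graph H T \<phi> \<psi>)) A) p \<and> set p \<subseteq> E0"
begin

abbreviation "TA \<equiv> subg Q (verts Q) A"

definition VX where "VX = {v \<in> verts T. cv v \<in> W}"
definition EE where "EE = {e \<in> arcs T. ce e \<in> (arcs Q - A) \<union> E0}"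

lemma TA_tree: "is_tree TA" and AQ: "A \<subseteq> arcs Q"
  using stA unfolding spanning_tree_def by auto

lemma A_rev: assumes "c \<in> A" shows "rev Q c \<in> A"
proof -
  have "is_sgraph TA" using TA_tree unfolding is_tree_def by auto
  thus ?thesis using assms unfolding is_sgraph_def by auto
qed

lemma EE_src: assumes "e \<in> EE" shows "src T e \<in> VX"
proof -
  have e: "e \<in> arcs T" "ce e \<in> (arcs Q - A) \<union> E0" using assms unfolding EE_def by auto
  have "cv (src T e) = src Q (ce e)" using src_Q[OF e(1)] by simp
  moreover have "src Q (ce e) \<in> W" using e(2) FW E0c by auto
  ultimately show ?thesis unfolding VX_def using sg_rev(4)[OF sg e(1)] by auto
qed

lemma EE_rev: assumes "e \<in> EE" shows "rev T e \<in> EE"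
proof -
  have e: "e \<in> arcs T" "ce e \<in> (arcs Q - A) \<union> E0" using assms unfolding EE_def by auto
  have r: "rev T e \<in> arcs T" using sg_rev(1)[OF sg e(1)] .
  have eq: "ce (rev T e) = rev Q (ce e)" using rev_Q[OF e(1)] by simp
  have ceQ: "ce e \<in> arcs Q" using e(1) Q_simps by auto
  have "rev Q (ce e) \<in> (arcs Q - A) \<union> E0"
  proof (cases "ce e \<in> E0")
    case True thus ?thesis using E0c by auto
  next
    case False
    hence nA: "ce e \<notin> A" using e(2) by auto
    have "rev Q (ce e) \<in> arcs Q" using sgQ ceQ unfolding is_sgraph_def by auto
    moreover have "rev Q (ce e) \<notin> A"
    proof
      assume "rev Q (ce e) \<in> A"
      hence "rev Q (rev Q (ce e)) \<in> A" by (rule A_rev)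
      moreover have "rev Q (rev Q (ce e)) = ce e" using sgQ ceQ unfolding is_sgraph_def by auto
      ultimately show False using nA by simp
    qed
    ultimately show ?thesis by simp
  qed
  thus ?thesis unfolding EE_def using r eq by simp
qed

lemma EE_tgt: "e \<in> EE \<Longrightarrow> tgt T e \<in> VX"
  unfolding tgt_def using EE_rev EE_src by blast

lemma EE_arcs: "EE \<subseteq> arcs T" and VX_verts: "VX \<subseteq> verts T"
  unfolding EE_def VX_def by auto

lemma segment:
  assumes x0: "x0 \<in> VX" and P: "is_path T x0 (r @ [e]) z" and z: "z \<in> VX"
    and R: "reduced T (r @ [e])" and out: "\<forall>f\<in>set r. tgt T f \<notin> VX"
  shows "set (r @ [e]) \<subseteq> EE"
proof -
  define s where "s = r @ [e]"
  have sT: "set s \<subseteq> arcs T" using path_arcs[OF P] unfolding s_def .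
  have PQ: "is_path Q (cv x0) (map ce s) (cv z)" using path_proj[OF P] unfolding s_def .
  have W: "cv x0 \<in> W" "cv z \<in> W" using x0 z unfolding VX_def by auto
  obtain p0 where p0: "is_path TA (cv x0) p0 (cv z)" "reduced TA p0" "set p0 \<subseteq> E0"
    using conn W by blast
  have Wv: "cv x0 \<in> verts Q" "cv z \<in> verts Q" using W Wsub by auto
  have pathTA: "\<And>p. is_path Q (cv x0) p (cv z) \<Longrightarrow> set p \<subseteq> A \<Longrightarrow> is_path TA (cv x0) p (cv z)"
    using path_subg[of "verts Q" Q A] AQ Wv by auto
  show ?thesis
  proof (cases "r = []")
    case True
    hence se: "s = [e]" unfolding s_def by simp
    have ea: "e \<in> arcs T" using sT se by simp
    have ceQ: "ce e \<in> arcs Q" using ea Q_simps by auto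
    show ?thesis
    proof (cases "ce e \<in> A")
      case False
      hence "e \<in> EE" unfolding EE_def using ea ceQ by auto
      thus ?thesis using True by simp
    next
      case True
      have "is_path TA (cv x0) [ce e] (cv z)" using pathTA PQ se True by simp
      moreover have "reduced TA [ce e]" by simp
      ultimately have "[ce e] = p0" using tree_unique[OF TA_tree] p0 by blast
      hence "ce e \<in> E0" using p0(3) by auto
      hence "e \<in> EE" unfolding EE_def using ea by auto
      thus ?thesis using \<open>r = []\<close> by simp
    qed
  next
    case False
    have pr: "is_path T x0 r (src T e)" using P path_snoc[OF sg] by blast
    have lr: "tgt T (last r) = src T e" using pr False unfolding is_path_def by auto
    have notin: "\<forall>f\<in>set s. ce f \<notin> (arcs Q - A) \<union> E0"
    proof
      fix f assume f: "f \<in> set s"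
      show "ce f \<notin> (arcs Q - A) \<union> E0"
      proof
        assume cf: "ce f \<in> (arcs Q - A) \<union> E0"
        have fa: "f \<in> arcs T" using f sT by auto
        hence fX: "f \<in> EE" unfolding EE_def using cf by auto
        show False
        proof (cases "f \<in> set r")
          case True thus False using out EE_tgt[OF fX] by blast
        next
          case False
          hence "f = e" using f unfolding s_def by auto
          hence "tgt T (last r) \<in> VX" using lr EE_src[OF fX] by simp
          moreover have "last r \<in> set r" using \<open>r \<noteq> []\<close> by simp
          ultimately show False using out by blast
        qed
      qed
    qed
    have sA: "set (map ce s) \<subseteq> A"
    proof
      fix c assume "c \<in> set (map ce s)"
      then obtain f where f: "f \<in> set s" "c = ce f" by auto
      have "ce f \<in> arcs Q" using f sT Q_simps by auto
      thus "c \<in> A" using notin f by auto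
    qed
    have PA: "is_path TA (cv x0) (map ce s) (cv z)" using pathTA[OF PQ sA] .
    have sne: "s \<noteq> []" unfolding s_def by simp
    show ?thesis
    proof (cases "reduced Q (map ce s)")
      case True
      hence "reduced TA (map ce s)" by simp
      hence "map ce s = p0" using tree_unique[OF TA_tree PA _ p0(1,2)] by simp
      hence "ce (hd s) \<in> E0" using p0(3) sne by (cases s) auto
      moreover have "hd s \<in> set s" using sne by simp
      ultimately show ?thesis using notin by blast
    next
      case False
      then obtain i where i: "Suc i < length s" "(map ce s) ! Suc i = rev Q ((map ce s) ! i)"
        unfolding reduced_def by auto
      have ai: "s ! i \<in> arcs T" "s ! Suc i \<in> arcs T" using i(1) sT by auto
      have "ce (s ! Suc i) = ce (rev T (s ! i))" using i rev_Q[OF ai(1)] by simp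
      then obtain h where h: "h \<in> H" "s ! Suc i = \<psi> h (rev T (s ! i))"
        using ce_eq[OF sg_rev(1)[OF sg ai(1)] ai(2)] by blast
      define v where "v = tgt T (s ! i)"
      have vsrc: "v = src T (s ! Suc i)" using P i(1) sne unfolding s_def v_def is_path_def by auto
      have ir: "i < length r" using i(1) unfolding s_def by simp
      hence "s ! i \<in> set r" unfolding s_def by (simp add: nth_append)
      hence vX: "v \<notin> VX" using out unfolding v_def by blast
      have vT: "v \<in> verts T" unfolding v_def tgt_def using sg_rev(4)[OF sg sg_rev(1)[OF sg ai(1)]] .
      hence "cv v \<notin> W" using vX unfolding VX_def by auto
      hence nv: "cv v \<notin> NQ" using NW by auto
      have "src T (s ! Suc i) = \<phi> h (src T (rev T (s ! i)))"
        using h compat(1)[OF Hc[OF h(1)] sg_rev(1)[OF sg ai(1)]] by simp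
      hence "\<phi> h v = v" using vsrc unfolding v_def tgt_def by simp
      hence "h = \<one>\<^bsub>G\<^esub>" using stab_trivial[OF vT nv h(1)] by simp
      hence "s ! Suc i = rev T (s ! i)" using h psi_one sg_rev(1)[OF sg ai(1)] by simp
      thus ?thesis using R i(1) unfolding s_def reduced_def by auto
    qed
  qed
qed

lemma Kgen:
  "is_path T x q y \<Longrightarrow> reduced T (r @ q) \<Longrightarrow> is_path T x0 r x \<Longrightarrow> x0 \<in> VX \<Longrightarrow> y \<in> VX
   \<Longrightarrow> \<forall>f\<in>set r. tgt T f \<notin> VX \<Longrightarrow> set (r @ q) \<subseteq> EE"
proof (induction q arbitrary: r x x0)
  case Nil
  hence "x = y" by simp
  show ?case
  proof (cases "r = []")
    case True thus ?thesis by simp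
  next
    case False
    have "tgt T (last r) = x" using Nil.prems(3) False unfolding is_path_def by auto
    thus ?thesis using Nil.prems \<open>x = y\<close> False by auto
  qed
next
  case (Cons e q)
  have e: "e \<in> arcs T" "src T e = x" "is_path T (tgt T e) q y" using Cons.prems(1) path_Cons[OF sg] by auto
  have P: "is_path T x0 (r @ [e]) (tgt T e)"
    using Cons.prems(3) e path_snoc[OF sg] by blast
  have R: "reduced T ((r @ [e]) @ q)" using Cons.prems(2) by simp
  hence Re: "reduced T (r @ [e])" "reduced T q" using reduced_append by blast+
  show ?case
  proof (cases "tgt T e \<in> VX")
    case True
    have s1: "set (r @ [e]) \<subseteq> EE" using segment[OF Cons.prems(4) P True Re(1) Cons.prems(6)] .
    have tv: "is_path T (tgt T e) [] (tgt T e)" using path_verts1[OF e(3)] by simp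
    have "set ([] @ q) \<subseteq> EE" using Cons.IH[OF e(3) _ tv True Cons.prems(5)] Re(2) by simp
    thus ?thesis using s1 by auto
  next
    case False
    have "\<forall>f\<in>set (r @ [e]). tgt T f \<notin> VX" using Cons.prems(6) False by auto
    hence "set ((r @ [e]) @ q) \<subseteq> EE" using Cons.IH[OF e(3) R P Cons.prems(4,5)] by simp
    thus ?thesis by simp
  qed
qed

lemma X_tree: "is_tree (subg T VX EE)"
proof -
  have sgX: "is_sgraph (subg T VX EE)"
    unfolding is_sgraph_def using EE_src EE_rev EE_arcs sg_rev[OF sg] by auto
  obtain w where w: "w \<in> W" using Wne by blast
  then obtain v where v: "v \<in> verts T" "w = cv v" using Wsub Q_simps by auto
  hence ne: "VX \<noteq> {}" unfolding VX_def using w by auto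
  have cn: "connected_sg (subg T VX EE)" unfolding connected_sg_def
  proof (intro ballI)
    fix x y assume x: "x \<in> verts (subg T VX EE)" and y: "y \<in> verts (subg T VX EE)"
    hence xy: "x \<in> VX" "y \<in> VX" by auto
    obtain q where q: "is_path T x q y" "reduced T q" using tree_path_exists[OF tree] xy VX_verts by blast
    have px: "is_path T x [] x" using xy(1) VX_verts by auto
    have "set ([] @ q) \<subseteq> EE" using Kgen[OF q(1) _ px xy(1) xy(2)] q(2) by simp
    thus "\<exists>es. is_path (subg T VX EE) x es y"
      using q path_subg[OF VX_verts EE_arcs] xy by auto
  qed
  have nc: "\<not> (\<exists>v es. es \<noteq> [] \<and> is_path (subg T VX EE) v es v \<and> reduced (subg T VX EE) es)"
    using tree path_subg[OF VX_verts EE_arcs] unfolding is_tree_def by auto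
  show ?thesis unfolding is_tree_def using sgX ne cn nc by simp
qed

lemma X_inv: "inv_subtree H T \<phi> \<psi> VX EE"
proof -
  have "\<forall>h\<in>H. \<phi> h ` VX \<subseteq> VX \<and> \<psi> h ` EE \<subseteq> EE"
  proof
    fix h assume h: "h \<in> H"
    have "\<phi> h ` VX \<subseteq> VX" unfolding VX_def using cv_act[OF h] phi_closed[OF Hc[OF h]] by auto
    moreover have "\<psi> h ` EE \<subseteq> EE" unfolding EE_def using ce_act[OF h] psi_closed[OF Hc[OF h]] by auto
    ultimately show "\<phi> h ` VX \<subseteq> VX \<and> \<psi> h ` EE \<subseteq> EE" by simp
  qed
  thus ?thesis unfolding inv_subtree_def using VX_verts EE_arcs X_tree by simp
qed

lemma X_fin:
  assumes "finite W" "finite E0" "finite (arcs Q - A)"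
  shows "finite (cv ` VX)" "finite (ce ` EE)"
proof -
  have "cv ` VX \<subseteq> W" unfolding VX_def by auto
  thus "finite (cv ` VX)" using assms(1) finite_subset by blast
  have "ce ` EE \<subseteq> (arcs Q - A) \<union> E0" unfolding EE_def by auto
  thus "finite (ce ` EE)" using assms(2,3) finite_subset by blast
qed

end

context tsetup
begin

lemma case2:
  assumes hyp: "has_hyperbolic H T \<phi>" and K: "kurosh_rank H T \<phi> \<psi> < \<infinity>"
  shows "\<exists>V E. inv_subtree H T \<phi> \<psi> V E \<and> finite (cv ` V) \<and> finite (ce ` E)"
proof -
  have "graph_rank Q + ecard NQ < \<infinity>" using K hyp unfolding kurosh_rank_def by simp
  hence gr: "graph_rank Q \<noteq> \<infinity>" and ec: "ecard NQ \<noteq> \<infinity>"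
    by (cases "graph_rank Q"; cases "ecard NQ"; simp)+
  obtain A where A: "spanning_tree Q A" "finite (arcs Q - A)"
    using gr unfolding graph_rank_def by (meson)
  have fN: "finite NQ" using ec unfolding ecard_def by (auto split: if_splits)
  obtain v0 where v0: "v0 \<in> verts T" using tree unfolding is_tree_def by blast
  define S where "S = insert (cv v0) (NQ \<union> src Q ` (arcs Q - A))"
  have fS: "finite S" unfolding S_def using fN A(2) by simp
  have NQv: "NQ \<subseteq> verts Q" unfolding nondeg_quot_verts_def Q_simps by auto
  have Fv: "src Q ` (arcs Q - A) \<subseteq> verts Q" using sgQ unfolding is_sgraph_def by auto
  have Sv: "S \<subseteq> verts Q" unfolding S_def using NQv Fv v0 Q_simps by auto
  have TAt: "is_tree (subg Q (verts Q) A)" using A(1) unfolding spanning_tree_def by simp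
  obtain W E0 where WE: "finite W" "finite E0" "S \<subseteq> W" "W \<subseteq> verts Q" "E0 \<subseteq> A"
    "\<forall>e\<in>E0. src Q e \<in> W \<and> rev Q e \<in> E0"
    "\<forall>a\<in>W. \<forall>c\<in>W. \<exists>p. is_path (subg Q (verts Q) A) a p c \<and> reduced (subg Q (verts Q) A) p \<and> set p \<subseteq> E0"
    using finite_subtree[OF TAt fS, of "cv v0"] Sv unfolding S_def by auto
  interpret c: c2 G H T \<phi> \<psi> A W E0
  proof
    show "spanning_tree Q A" by (rule A(1))
    show "NQ \<subseteq> W" using WE(3) unfolding S_def by auto
    show "src Q ` (arcs Q - A) \<subseteq> W" using WE(3) unfolding S_def by auto
    show "W \<subseteq> verts Q" by (rule WE(4))
    show "W \<noteq> {}" using WE(3) unfolding S_def by auto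
    show "E0 \<subseteq> A" by (rule WE(5))
    show "\<forall>e\<in>E0. src Q e \<in> W \<and> rev Q e \<in> E0" by (rule WE(6))
    show "\<forall>a\<in>W. \<forall>c\<in>W. \<exists>p. is_path (subg Q (verts Q) A) a p c \<and> reduced (subg Q (verts Q) A) p \<and> set p \<subseteq> E0"
      by (rule WE(7))
  qed
  show ?thesis using c.X_inv c.X_fin[OF WE(1,2) A(2)] by blast
qed

lemma orbit_eq_set:
  assumes sub1: "V' \<subseteq> V" and V: "V \<subseteq> verts T" and inv: "\<forall>h\<in>H. \<phi> h ` V' \<subseteq> V'"
    and eq: "cv ` V' = cv ` V"
  shows "V' = V"
proof
  show "V \<subseteq> V'"
  proof
    fix x assume x: "x \<in> V"
    then obtain y where y: "y \<in> V'" "cv x = cv y" using eq by (metis imageE imageI)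
    have xT: "x \<in> verts T" "y \<in> verts T" using x y sub1 V by auto
    obtain h where h: "h \<in> H" "x = \<phi> h y" using cv_eq[OF xT(2) xT(1)] y(2) by metis
    thus "x \<in> V'" using inv y(1) by auto
  qed
qed (rule sub1)

lemma orbit_eq_set_e:
  assumes sub1: "V' \<subseteq> V" and V: "V \<subseteq> arcs T" and inv: "\<forall>h\<in>H. \<psi> h ` V' \<subseteq> V'"
    and eq: "ce ` V' = ce ` V"
  shows "V' = V"
proof
  show "V \<subseteq> V'"
  proof
    fix x assume x: "x \<in> V"
    then obtain y where y: "y \<in> V'" "ce x = ce y" using eq by (metis imageE imageI)
    have xT: "x \<in> arcs T" "y \<in> arcs T" using x y sub1 V by auto
    obtain h where h: "h \<in> H" "x = \<psi> h y" using ce_eq[OF xT(2) xT(1)] y(2) by metis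
    thus "x \<in> V'" using inv y(1) by auto
  qed
qed (rule sub1)

lemma minimal_exists:
  assumes "\<exists>V E. inv_subtree H T \<phi> \<psi> V E \<and> finite (cv ` V) \<and> finite (ce ` E)"
  shows "\<exists>V E. minimal_inv_subtree H T \<phi> \<psi> V E \<and> finite (cv ` V) \<and> finite (ce ` E)"
proof -
  define P where "P n \<longleftrightarrow> (\<exists>V E. inv_subtree H T \<phi> \<psi> V E \<and> finite (cv ` V) \<and> finite (ce ` E)
      \<and> card (cv ` V) + card (ce ` E) = n)" for n
  have "\<exists>n. P n" using assms unfolding P_def by blast
  hence "P (LEAST n. P n)" by (rule LeastI_ex)
  then obtain V E where VE: "inv_subtree H T \<phi> \<psi> V E" "finite (cv ` V)" "finite (ce ` E)"
    "card (cv ` V) + card (ce ` E) = (LEAST n. P n)" unfolding P_def by blast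
  have "minimal_inv_subtree H T \<phi> \<psi> V E"
    unfolding minimal_inv_subtree_def
  proof (rule conjI[OF VE(1)], intro allI impI)
    fix V'' E'' assume H2: "inv_subtree H T \<phi> \<psi> V'' E'' \<and> V'' \<subseteq> V \<and> E'' \<subseteq> E"
    have s1: "cv ` V'' \<subseteq> cv ` V" "ce ` E'' \<subseteq> ce ` E" using H2 by auto
    have f1: "finite (cv ` V'')" "finite (ce ` E'')" using s1 VE(2,3) finite_subset by auto
    have c1: "card (cv ` V'') \<le> card (cv ` V)" "card (ce ` E'') \<le> card (ce ` E)"
      using s1 VE(2,3) card_mono by auto
    have "P (card (cv ` V'') + card (ce ` E''))" unfolding P_def using H2 f1 by blast
    hence "(LEAST n. P n) \<le> card (cv ` V'') + card (ce ` E'')" by (rule Least_le)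
    hence c2: "card (cv ` V'') = card (cv ` V)" "card (ce ` E'') = card (ce ` E)" using c1 VE(4) by auto
    have e1: "cv ` V'' = cv ` V" using card_subset_eq[OF VE(2) s1(1) c2(1)] .
    have e2: "ce ` E'' = ce ` E" using card_subset_eq[OF VE(3) s1(2) c2(2)] .
    have inv2: "\<forall>h\<in>H. \<phi> h ` V'' \<subseteq> V''" "\<forall>h\<in>H. \<psi> h ` E'' \<subseteq> E''"
      using H2 unfolding inv_subtree_def by auto
    have VT: "V \<subseteq> verts T" "E \<subseteq> arcs T" using VE(1) unfolding inv_subtree_def by auto
    show "V'' = V \<and> E'' = E"
      using orbit_eq_set[OF _ VT(1) inv2(1) e1] orbit_eq_set_e[OF _ VT(2) inv2(2) e2] H2 by blast
  qed
  thus ?thesis using VE by blast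
qed

end

theorem lemma2p3:
  fixes G :: "('g, 'b) monoid_scheme" and H :: "'g set"
    and T :: "('v, 'e) sgraph"
    and \<phi> :: "'g \<Rightarrow> 'v \<Rightarrow> 'v" and \<psi> :: "'g \<Rightarrow> 'e \<Rightarrow> 'e"
  assumes "tree_action G T \<phi> \<psi>"
    and "without_inversions G T \<psi>"
    and "subgroup H G"
    and "acts_freely_on_edges G H T \<psi>"
    and "kurosh_rank H T \<phi> \<psi> < \<infinity>"
  shows "tame H T \<phi> \<psi>"
proof -
  interpret tsetup G H T \<phi> \<psi> by (rule tsetup.intro[OF assms(1-4)])
  show ?thesis
  proof (cases "has_hyperbolic H T \<phi>")
    case False
    thus ?thesis using case1 unfolding tame_def by blast
  next
    case True
    obtain V E where "minimal_inv_subtree H T \<phi> \<psi> V E" "finite (cv ` V)" "finite (ce ` E)"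
      using minimal_exists[OF case2[OF True assms(5)]] by blast
    thus ?thesis using True unfolding tame_def by blast
  qed
qed

end
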